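(* Consider the following setup. Let $K<\infty$ and, for $i=1,\ldots,K$, let $\{T^{(i)}_{n_i}\}$ be a sequence of test statistics for testing $H_0^{(i)}:\theta_i\in\Theta_0^{(i)}$ against $\theta_i\in\Theta^{(i)}\setminus\Theta_0^{(i)}$, with $p$-values $p_i=p_i^{(n_i)}$. Assume that under the null the statistics $T^{(1)}_{n_1},\ldots,T^{(K)}_{n_K}$ are independent for all sample sizes, and that each sequence has exact slope $c_i(\theta_i)\ge 0$, i.e. $-\frac{2}{n_i}\log p_i^{(n_i)}\to c_i(\theta_i)$ with probability one as $n_i\to\infty$, where $c_i(\theta_i)=0$ for $\theta_i\in\Theta_0^{(i)}$ and $c_i(\theta_i)>0$ otherwise. Let $n=\frac1K\sum_{i=1}^K n_i$ and assume $n_i/n\to\lambda_i>0$ with $\sum_{i=1}^K\lambda_i=K$. Assume (after relabeling) $\lambda_1c_1(\theta_1)\ge\cdots\ge\lambda_Kc_K(\theta_K)\ge0$, where exactly the first $\ell$ parameters lie in the alternatives ($\theta_i\in\Theta^{(i)}\setminus\Theta^{(i)}_0$, so $c_i(\theta_i)>0$, for $1\le i\le \ell$) and $\theta_i\in\Theta_0^{(i)}$ for $\ell<i\le K$. Let $p_{(1)}\le\cdots\le p_{(K)}$ be the ordered $p$-values and define the AFp statistic $$T_{\mathrm{AFp}}=\max_{1\le j\le K}\Big[-\log \bar F_{\chi^2_{2j}}\Big(-2\sum_{i=1}^j\log p_{(i)}\Big)\Big],$$ where $\bar F_{\chi^2_{2j}}=1-F_{\chi^2_{2j}}$ and $F_{\chi^2_{2j}}$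 is the CDF of the chi-squared distribution with $2j$ degrees of freedom. Then $T_{\mathrm{AFp}}$ is asymptotically Bahadur optimal, with exact slope $C_{\mathrm{AFp}}(\vec\theta)=\sum_{i=1}^\ell\lambda_ic_i(\theta_i)$.
   Context: The exact slope of a combination test with $p$-value $p$ (computed from its null distribution, under which $p_1,\ldots,p_K$ are i.i.d. Unif$(0,1)$) is the function $C(\vec\theta)$, $\vec\theta=(\theta_1,\ldots,\theta_K)$, such that $-\frac{2}{n}\log p\to C(\vec\theta)$ with probability one as $n\to\infty$. A combination test is called asymptotically Bahadur optimal (ABO) if its exact slope equals $\sum_{i=1}^\ell\lambda_ic_i(\theta_i)$, which is the maximal attainable exact slope for any $p$-value combination method in this setup. *)

theory Defs
  imports "HOL-Probability.Probability"
begin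

definition chisq_density :: "nat \<Rightarrow> real \<Rightarrow> real" where
  "chisq_density k x =
     (if 0 < x then x powr (real k / 2 - 1) * exp (- x / 2) / (2 powr (real k / 2) * Gamma (real k / 2))
      else 0)"

definition chisq_CDF :: "nat \<Rightarrow> real \<Rightarrow> real" where
  "chisq_CDF k x = (LINT t:{..x}|lborel. chisq_density k t)"

text \<open>Ordered p-values (0-based): ordered_pval K p i is p_(i+1), for i < K.\<close>
definition ordered_pval :: "nat \<Rightarrow> (nat \<Rightarrow> real) \<Rightarrow> nat \<Rightarrow> real" where
  "ordered_pval K p i = sort (map p [0..<K]) ! i"

definition AFp_stat :: "nat \<Rightarrow> (nat \<Rightarrow> real) \<Rightarrow> real" where
  "AFp_stat K p = Max ((\<lambda>j. - ln (1 - chisq_CDF (2 * j) (- 2 * (\<Sum>i<j. ln (ordered_pval K p i))))) ` {1..K})"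

definition null_pvals :: "nat \<Rightarrow> (nat \<Rightarrow> real) measure" where
  "null_pvals K = PiM {..<K} (\<lambda>_. uniform_measure lborel {0..1})"

definition AFp_pvalue :: "nat \<Rightarrow> real \<Rightarrow> real" where
  "AFp_pvalue K t = measure (null_pvals K) {u \<in> space (null_pvals K). t \<le> AFp_stat K u}"

end

theory Submission imports Defs "HOL-Library.Multiset" begin

definition E :: "nat \<Rightarrow> real \<Rightarrow> real" where
  "E j x = (\<Sum>k<j. (x/2)^k / fact k)"

lemma E_deriv:
  "((\<lambda>t. exp(-t/2) * E (Suc i) t) has_real_derivative
     (-(1/2) * exp(-t/2) * (t/2)^i / fact i)) (at t)"
proof (induction i)
  case 0
  show ?case unfolding E_def
    by (auto intro!: derivative_eq_intros)
next
  case (Suc i)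
  have eq: "(\<lambda>t. exp(-t/2) * E (Suc (Suc i)) t) =
     (\<lambda>t. exp(-t/2) * E (Suc i) t + exp(-t/2) * ((t/2)^(Suc i) / fact (Suc i)))"
    by (auto simp: E_def algebra_simps)
  have d2: "((\<lambda>t. exp(-t/2) * ((t/2)^(Suc i) / fact (Suc i))) has_real_derivative
     (-(1/2) * exp(-t/2) * ((t/2)^(Suc i) / fact (Suc i)) + exp(-t/2) * ((1/2) * (t/2)^i / fact i))) (at t)"
  proof -
    have p: "((\<lambda>t. (t/2)^(Suc i)) has_real_derivative (real (Suc i) * (t/2)^i * (1/2))) (at t)"
    proof -
      have "((\<lambda>t. t^(Suc i) / 2^(Suc i)) has_real_derivative (real (Suc i) * t^i / 2^(Suc i))) (at t)"
        using DERIV_cdivide[OF DERIV_pow[of "Suc i" t], of "2^Suc i"] by simp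
      then show ?thesis by (simp add: power_divide field_simps)
    qed
    have e: "((\<lambda>t. exp(-t/2)) has_real_derivative (exp(-t/2) * (-(1/2)))) (at t)"
      by (auto intro!: derivative_eq_intros)
    have D: "((\<lambda>t. exp(-t/2) * ((t/2)^(Suc i) / fact (Suc i))) has_real_derivative
     (exp(-t/2) * (-(1/2)) * ((t/2)^(Suc i) / fact (Suc i)) + exp(-t/2) * (real (Suc i) * (t/2)^i * (1/2) / fact (Suc i)))) (at t)"
      using DERIV_mult[OF e DERIV_cdivide[OF p, of "fact (Suc i)"]] by (simp add: algebra_simps)
    have q: "real (Suc i) * (t/2)^i * (1/2) / fact (Suc i) = (1/2) * (t/2)^i / fact i"
      by (simp add: fact_Suc field_simps del: of_nat_Suc)
    show ?thesis using D unfolding q by (rule DERIV_cong) simp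
  qed
  show ?case unfolding eq
    apply (rule DERIV_cong[OF DERIV_add[OF Suc.IH d2]])
    by (simp add: algebra_simps)
qed

lemma E_0: "E (Suc i) 0 = 1"
  unfolding E_def by (induction i) auto

lemma chisq_CDF_formula:
  "chisq_CDF (2 * Suc i) x = (if x \<le> 0 then 0 else 1 - exp(-x/2) * E (Suc i) x)"
proof -
  define h where "h t = t^i * exp(-t/2) / (2^(Suc i) * fact i)" for t :: real
  have dens: "chisq_density (2 * Suc i) t = (if 0 < t then h t else 0)" for t
  proof -
    have a: "real (2 * Suc i) / 2 - 1 = real i" by (simp add: field_simps)
    have b: "real (2 * Suc i) / 2 = 1 + real i" by (simp add: field_simps)
    have c: "(2::real) powr (1 + real i) = 2 ^ Suc i"
      by (metis of_nat_Suc powr_realpow zero_less_numeral)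
    show ?thesis
      unfolding chisq_density_def h_def a b c Gamma_fact
      by (auto simp: powr_realpow)
  qed
  show ?thesis
  proof (cases "x \<le> 0")
    case True
    have "(\<lambda>t. indicator {..x} t *\<^sub>R chisq_density (2 * Suc i) t) = (\<lambda>t. 0)"
    proof (rule ext)
      fix t show "indicator {..x} t *\<^sub>R chisq_density (2 * Suc i) t = 0"
        using True dens[of t] by (auto simp: indicator_def)
    qed
    then show ?thesis using True unfolding chisq_CDF_def set_lebesgue_integral_def by simp
  next
    case False
    have "(LINT t|lborel. indicator {..x} t *\<^sub>R chisq_density (2 * Suc i) t)
        = (LINT t|lborel. indicator {0..x} t *\<^sub>R h t)"
    proof (rule integral_cong_AE)
      show "(\<lambda>t. indicator {..x} t *\<^sub>R chisq_density (2 * Suc i) t) \<in> borel_measurable lborel"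
        unfolding dens h_def by measurable
      show "(\<lambda>t. indicator {0..x} t *\<^sub>R h t) \<in> borel_measurable lborel"
        unfolding h_def by measurable
      show "AE t in lborel. indicator {..x} t *\<^sub>R chisq_density (2 * Suc i) t = indicator {0..x} t *\<^sub>R h t"
        using AE_lborel_singleton[of 0]
      proof eventually_elim
        case (elim t) then show ?case using dens[of t] False by (auto simp: indicator_def)
      qed
    qed
    also have "\<dots> = (1 - exp(-x/2) * E (Suc i) x) - (1 - exp(-0/2) * E (Suc i) 0)"
    proof (rule integral_FTC_atLeastAtMost)
      show "0 \<le> x" using False by simp
      show "continuous_on {0..x} h" unfolding h_def by (intro continuous_intros) auto
      fix t assume "0 \<le> t" "t \<le> x"
      have "((\<lambda>t. 1 - exp(-t/2) * E (Suc i) t) has_real_derivative (0 - (-(1/2) * exp(-t/2) * (t/2)^i / fact i))) (at t)"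
        by (intro DERIV_diff DERIV_const E_deriv)
      moreover have "0 - (-(1/2) * exp(-t/2) * (t/2)^i / fact i) = h t"
        unfolding h_def by (simp add: power_divide field_simps)
      ultimately show "((\<lambda>t. 1 - exp(-t/2) * E (Suc i) t) has_vector_derivative h t) (at t within {0..x})"
        by (simp add: has_real_derivative_iff_has_vector_derivative[symmetric] has_field_derivative_at_within)
    qed
    finally show ?thesis using False unfolding chisq_CDF_def set_lebesgue_integral_def by (simp add: E_0)
  qed
qed

definition G :: "nat \<Rightarrow> real \<Rightarrow> real" where
  "G j x = (if x \<le> 0 then 0 else x/2 - ln (E j x))"

lemma E_ge1: "0 \<le> x \<Longrightarrow> 1 \<le> E (Suc i) x"
proof -
  assume x: "0 \<le> x"
  have "E (Suc 0) x \<le> E (Suc i) x"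
    unfolding E_def by (rule sum_mono2) (use x in auto)
  then show ?thesis by (simp add: E_def)
qed

lemma E_le: assumes x: "0 \<le> x" shows "E j x \<le> real j * (1 + x/2)^j"
proof -
  have "(x/2)^k / fact k \<le> (1 + x/2)^j" if "k < j" for k
  proof -
    have "(x/2)^k / fact k \<le> (x/2)^k"
      using x by (simp add: divide_le_eq fact_ge_1 mult_le_cancel_left1 zero_le_power) 
    also have "\<dots> \<le> (1 + x/2)^k" using x by (intro power_mono) auto
    also have "\<dots> \<le> (1 + x/2)^j" using x that by (intro power_increasing) auto
    finally show ?thesis .
  qed
  then have "E j x \<le> (\<Sum>k<j. (1 + x/2)^j)" unfolding E_def by (intro sum_mono) auto
  then show ?thesis by simp
qed

lemma G_formula: "- ln (1 - chisq_CDF (2 * Suc i) x) = G (Suc i) x"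
proof (cases "x \<le> 0")
  case True then show ?thesis unfolding chisq_CDF_formula G_def by simp
next
  case False
  have "E (Suc i) x > 0" using E_ge1[of x i] False by simp
  then show ?thesis using False unfolding chisq_CDF_formula G_def
    by (simp add: ln_mult)
qed

lemma G_le: "1 \<le> j \<Longrightarrow> G j x \<le> max 0 (x/2)"
proof -
  assume "1 \<le> j"
  then obtain i where j: "j = Suc i" by (cases j) auto
  show ?thesis
  proof (cases "x \<le> 0")
    case True then show ?thesis by (simp add: G_def)
  next
    case False
    then have "ln (E j x) \<ge> 0" using E_ge1[of x i] j by simp
    then show ?thesis using False by (simp add: G_def)
  qed
qed

lemma G1: "G (Suc 0) x = max 0 (x/2)"
  by (simp add: G_def E_def)

lemma ln_1p_le_sqrt: assumes "0 \<le> s" shows "ln (1 + s) \<le> 2 * sqrt s"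
proof -
  have "ln (1 + s) = 2 * ln (sqrt (1 + s))"
    using assms by (simp add: ln_sqrt)
  also have "\<dots> \<le> 2 * (sqrt (1 + s) - 1)"
    using assms ln_le_minus_one[of "sqrt (1+s)"] by simp
  also have "sqrt (1 + s) \<le> 1 + sqrt s"
    using assms by (metis real_sqrt_one sqrt_add_le_add_sqrt zero_le_one)
  hence "2 * (sqrt (1 + s) - 1) \<le> 2 * sqrt s" by simp
  finally show ?thesis .
qed

lemma G_lower: assumes j: "1 \<le> j" and s: "0 \<le> s"
  shows "s - ln (real j) - 2 * real j * sqrt s \<le> G j (2 * s)"
proof (cases "s = 0")
  case True
  then show ?thesis using j by (simp add: G_def)
next
  case False
  then have sp: "s > 0" using s by simp
  obtain i where ji: "j = Suc i" using j by (cases j) auto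
  have E1: "1 \<le> E j (2 * s)" using E_ge1[of "2 * s" i] ji s by simp
  have "ln (E j (2 * s)) \<le> ln (real j * (1 + s)^j)"
    using E_le[of "2 * s" j] s E1 by (intro ln_mono) auto
  also have "\<dots> = ln (real j) + real j * ln (1 + s)"
    using j s by (simp add: ln_mult ln_realpow)
  also have "\<dots> \<le> ln (real j) + real j * (2 * sqrt s)"
    using ln_1p_le_sqrt[OF s] by (intro add_left_mono mult_left_mono) auto
  finally show ?thesis using sp by (simp add: G_def)
qed

lemma sorted_nth_le_iff:
  fixes ys :: "real list"
  shows "sorted ys \<Longrightarrow> i < length ys \<Longrightarrow> (ys ! i \<le> c) = (i < length (filter (\<lambda>x. x \<le> c) ys))"
proof (induction ys arbitrary: i)
  case Nil then show ?case by simp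
next
  case (Cons y ys)
  show ?case
  proof (cases "y \<le> c")
    case True
    then show ?thesis using Cons by (cases i) auto
  next
    case False
    then have f: "filter (\<lambda>x. x \<le> c) ys = []" using Cons.prems(1)
      by (auto simp: filter_empty_conv)
    have "(y # ys) ! i \<ge> y" using Cons.prems
      by (cases i) (auto simp: nth_mem)
    then show ?thesis using False f by auto
  qed
qed

lemma sum_sort: fixes g :: "'a::linorder \<Rightarrow> 'b::comm_monoid_add" shows "sum_list (map g (sort xs)) = sum_list (map g xs)"
proof -
  have "sum_list (map g (sort xs)) = sum_mset (mset (map g (sort xs)))" by (simp only: sum_mset_sum_list)
  also have "\<dots> = sum_mset (mset (map g xs))" by (simp only: mset_map mset_sort)
  also have "\<dots> = sum_list (map g xs)" by (simp only: sum_mset_sum_list)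
  finally show ?thesis .
qed

lemma length_filter_sort: "length (filter P (sort xs)) = length (filter P xs)"
proof -
  have "length (filter P (sort xs)) = size (mset (filter P (sort xs)))" by (simp only: size_mset)
  also have "\<dots> = size (mset (filter P xs))" by (simp only: mset_filter mset_sort)
  also have "\<dots> = length (filter P xs)" by (simp only: size_mset)
  finally show ?thesis .
qed

lemma ordered_sum:
  "(\<Sum>i<K. g (ordered_pval K p i)) = (\<Sum>i<K. g (p i))"
proof -
  have "(\<Sum>i<K. g (ordered_pval K p i)) = sum_list (map g (sort (map p [0..<K])))"
    unfolding ordered_pval_def sum_list_sum_nth by (simp add: atLeast0LessThan)
  also have "\<dots> = sum_list (map g (map p [0..<K]))" by (rule sum_sort)
  also have "\<dots> = (\<Sum>i<K. g (p i))"
    unfolding sum_list_sum_nth by (simp add: atLeast0LessThan)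
  finally show ?thesis .
qed

lemma ordered_mem: "i < K \<Longrightarrow> ordered_pval K p i \<in> p ` {..<K}"
proof -
  assume "i < K"
  then have "ordered_pval K p i \<in> set (sort (map p [0..<K]))"
    unfolding ordered_pval_def by (intro nth_mem) simp
  then show ?thesis by auto
qed

lemma ordered_le0: "0 < K \<Longrightarrow> ordered_pval K p 0 \<le> p 0"
proof -
  assume K: "0 < K"
  let ?ys = "sort (map p [0..<K])"
  have "p 0 \<in> set ?ys" using K by auto
  then obtain k where k: "k < length ?ys" "?ys ! k = p 0" by (metis in_set_conv_nth)
  have "?ys ! 0 \<le> ?ys ! k" by (rule sorted_nth_mono) (use k in auto)
  then show ?thesis using k unfolding ordered_pval_def by simp
qed

lemma ordered_le_iff: "i < K \<Longrightarrow> (ordered_pval K p i \<le> c) = (real i < (\<Sum>k<K. if p k \<le> c then 1 else 0))"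
proof -
  assume i: "i < K"
  have "(ordered_pval K p i \<le> c) = (i < length (filter (\<lambda>x. x \<le> c) (sort (map p [0..<K]))))"
    unfolding ordered_pval_def by (rule sorted_nth_le_iff) (use i in auto)
  also have "\<dots> = (i < length (filter (\<lambda>x. x \<le> c) (map p [0..<K])))" by (simp only: length_filter_sort)
  also have "length (filter (\<lambda>x. x \<le> c) (map p [0..<K])) = card {k. k < K \<and> p k \<le> c}"
    unfolding length_filter_conv_card by (intro arg_cong[where f=card]) auto
  also have "real (card {k. k < K \<and> p k \<le> c}) = (\<Sum>k<K. if p k \<le> c then 1 else 0)"
  proof -
    have "{k. k < K \<and> p k \<le> c} = {..<K} \<inter> {k. p k \<le> c}" by auto
    then show ?thesis by (simp add: sum.If_cases)
  qed
  hence "(i < card {k. k < K \<and> p k \<le> c}) = (real i < (\<Sum>k<K. if p k \<le> c then 1 else 0))"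
    by (metis of_nat_less_iff)
  finally show ?thesis .
qed

lemma AFp_eq: "AFp_stat K p = Max ((\<lambda>j. G j (- 2 * (\<Sum>i<j. ln (ordered_pval K p i)))) ` {1..K})"
  unfolding AFp_stat_def
proof (intro arg_cong[where f=Max] image_cong refl)
  fix j assume "j \<in> {1..K}"
  then obtain i where j: "j = Suc i" by (cases j) auto
  show "- ln (1 - chisq_CDF (2 * j) (- 2 * (\<Sum>i<j. ln (ordered_pval K p i)))) =
        G j (- 2 * (\<Sum>i<j. ln (ordered_pval K p i)))"
    unfolding j by (rule G_formula)
qed

lemma AFp_ge: "1 \<le> j \<Longrightarrow> j \<le> K \<Longrightarrow> G j (- 2 * (\<Sum>i<j. ln (ordered_pval K p i))) \<le> AFp_stat K p"
  unfolding AFp_eq by (intro Max_ge) auto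

lemma AFp_nonneg: "1 \<le> K \<Longrightarrow> 0 \<le> AFp_stat K p"
  using AFp_ge[of 1 K p] by (simp add: G1)

lemma neg_ln_nonneg: "0 \<le> (v::real) \<Longrightarrow> v \<le> 1 \<Longrightarrow> 0 \<le> - ln v"
  by (cases "v = 0") auto

lemma AFp_upper:
  assumes p: "\<And>i. i < K \<Longrightarrow> 0 \<le> p i \<and> p i \<le> 1" and K: "1 \<le> K"
  shows "AFp_stat K p \<le> - (\<Sum>i<K. ln (p i))"
proof -
  have o: "0 \<le> - ln (ordered_pval K p i)" if iK: "i < K" for i
  proof -
    obtain k where k: "k < K" "ordered_pval K p i = p k" using ordered_mem[OF iK, of p] by auto
    then show ?thesis using neg_ln_nonneg[of "p k"] p[of k] by simp
  qed
  have tot: "- (\<Sum>i<K. ln (p i)) = (\<Sum>i<K. - ln (ordered_pval K p i))"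
    using ordered_sum[of "\<lambda>x. - ln x" K p] by (simp add: sum_negf)
  have "G j (- 2 * (\<Sum>i<j. ln (ordered_pval K p i))) \<le> - (\<Sum>i<K. ln (p i))" if j: "j \<in> {1..K}" for j
  proof -
    have "G j (- 2 * (\<Sum>i<j. ln (ordered_pval K p i))) \<le> max 0 ((- 2 * (\<Sum>i<j. ln (ordered_pval K p i)))/2)"
      using j by (intro G_le) auto
    also have "(- 2 * (\<Sum>i<j. ln (ordered_pval K p i)))/2 = (\<Sum>i<j. - ln (ordered_pval K p i))"
      by (simp add: sum_negf)
    also have "(\<Sum>i<j. - ln (ordered_pval K p i)) \<le> (\<Sum>i<K. - ln (ordered_pval K p i))"
      using j o by (intro sum_mono2) auto
    also have "max 0 (\<Sum>i<K. - ln (ordered_pval K p i)) = (\<Sum>i<K. - ln (ordered_pval K p i))"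
      using o by (intro max_absorb2 sum_nonneg) auto
    finally show ?thesis using tot by (simp add: max_def split: if_splits)
  qed
  then show ?thesis unfolding AFp_eq using K by (subst Max_le_iff) auto
qed

lemma AFp_lower1:
  assumes p: "\<And>i. i < K \<Longrightarrow> 0 < p i \<and> p i \<le> 1" and K: "1 \<le> K"
  shows "- ln (p 0) \<le> AFp_stat K p"
proof -
  have pos: "0 < ordered_pval K p 0" using ordered_mem[of 0 K p] K p by auto
  have le: "ordered_pval K p 0 \<le> p 0" using ordered_le0[of K p] K by simp
  have "- ln (p 0) \<le> - ln (ordered_pval K p 0)" using pos le by simp
  also have "\<dots> \<le> G 1 (- 2 * (\<Sum>i<1. ln (ordered_pval K p i)))"
    by (simp add: G1)
  also have "\<dots> \<le> AFp_stat K p" using K by (intro AFp_ge) auto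
  finally show ?thesis .
qed

lemma AFp_lower2:
  assumes p: "\<And>i. i < K \<Longrightarrow> 0 < p i \<and> p i \<le> 1" and K: "1 \<le> K"
  shows "- (\<Sum>i<K. ln (p i)) - ln (real K) - 2 * real K * sqrt (- (\<Sum>i<K. ln (p i))) \<le> AFp_stat K p"
proof -
  have s: "0 \<le> - (\<Sum>i<K. ln (p i))"
    using p by (auto intro!: sum_nonpos)
  have eq: "- 2 * (\<Sum>i<K. ln (ordered_pval K p i)) = 2 * (- (\<Sum>i<K. ln (p i)))"
    using ordered_sum[of ln K p] by simp
  have "- (\<Sum>i<K. ln (p i)) - ln (real K) - 2 * real K * sqrt (- (\<Sum>i<K. ln (p i)))
      \<le> G K (2 * (- (\<Sum>i<K. ln (p i))))" by (rule G_lower[OF K s])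
  also have "\<dots> \<le> AFp_stat K p" using AFp_ge[of K K p] K unfolding eq by simp
  finally show ?thesis .
qed

lemma unif_prob: "prob_space (uniform_measure lborel {0..1::real})"
  by (intro prob_space_uniform_measure) auto

lemma null_prob: "prob_space (null_pvals K)"
  unfolding null_pvals_def by (intro prob_space_PiM unif_prob)

lemma ordered_meas: "i < K \<Longrightarrow> (\<lambda>u. ordered_pval K u i) \<in> borel_measurable (null_pvals K)"
proof -
  assume i: "i < K"
  show ?thesis
  proof (subst borel_measurable_iff_le, intro allI)
    fix a
    have "{w \<in> space (null_pvals K). ordered_pval K w i \<le> a} =
          {w \<in> space (null_pvals K). real i < (\<Sum>k<K. if w k \<le> a then 1 else 0)}"
      using ordered_le_iff[OF i] by auto
    also have "\<dots> \<in> sets (null_pvals K)"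
      unfolding null_pvals_def by measurable
    finally show "{w \<in> space (null_pvals K). ordered_pval K w i \<le> a} \<in> sets (null_pvals K)" .
  qed
qed

lemma G_meas: "G j \<in> borel_measurable borel"
  unfolding G_def E_def by measurable

lemma AFp_meas: "AFp_stat K \<in> borel_measurable (null_pvals K)"
proof -
  have "(\<lambda>u. AFp_stat K u) = (\<lambda>u. Max ((\<lambda>j. G j (- 2 * (\<Sum>i<j. ln (ordered_pval K u i)))) ` {1..K}))"
    by (simp add: AFp_eq)
  also have "\<dots> \<in> borel_measurable (null_pvals K)"
  proof (rule borel_measurable_Max)
    fix j assume j: "j \<in> {1..K}"
    have [measurable]: "(\<lambda>u. ordered_pval K u i) \<in> borel_measurable (null_pvals K)" if "i < j" for i
      using that j by (intro ordered_meas) auto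
    have [measurable]: "G j \<in> borel_measurable borel" by (rule G_meas)
    show "(\<lambda>u. G j (- 2 * (\<Sum>i<j. ln (ordered_pval K u i)))) \<in> borel_measurable (null_pvals K)"
      by measurable
  qed simp
  finally show ?thesis by simp
qed

lemma unif_pps: "product_prob_space (\<lambda>_::nat. uniform_measure lborel {0..1::real})"
  by (simp add: product_prob_space_def product_prob_space_axioms_def product_sigma_finite_def
        unif_prob prob_space_imp_sigma_finite)

lemma pv_lower:
  assumes K: "1 \<le> K" and t: "0 \<le> t"
  shows "exp (- t) \<le> AFp_pvalue K t"
proof -
  interpret P: product_prob_space "\<lambda>_::nat. uniform_measure lborel {0..1::real}" "{..<K}" by (rule unif_pps)
  interpret N: prob_space "null_pvals K" by (rule null_prob)
  define A where "A k = (if k = 0 then {0<..exp (- t)} else {0<..1::real})" for k :: nat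
  define S where "S = {u \<in> space (null_pvals K). t \<le> AFp_stat K u}"
  have Ssets: "S \<in> sets (null_pvals K)"
    unfolding S_def using AFp_meas[of K] by measurable
  have et: "exp (- t) \<le> 1" using t by simp
  have sub: "Pi\<^sub>E {..<K} A \<subseteq> S"
  proof
    fix u assume u: "u \<in> Pi\<^sub>E {..<K} A"
    have ui: "u i \<in> A i" if "i < K" for i using u that by (simp add: PiE_iff)
    have p: "0 < u i \<and> u i \<le> 1" if "i < K" for i
    proof (cases "i = 0")
      case True
      then have "u i \<in> {0<..exp (- t)}" using ui[OF that] by (simp add: A_def)
      then have "0 < u i" "u i \<le> exp (- t)" by auto
      with et show ?thesis by linarith
    next
      case False then show ?thesis using ui[OF that] by (simp add: A_def)
    qed
    have u0: "0 < u 0" "u 0 \<le> exp (- t)" using ui[of 0] K by (auto simp: A_def)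
    have "ln (u 0) \<le> ln (exp (- t))" using u0 by (subst ln_le_cancel_iff) auto
    then have "t \<le> - ln (u 0)" by simp
    also have "\<dots> \<le> AFp_stat K u" by (rule AFp_lower1[OF p K]) auto
    finally have "t \<le> AFp_stat K u" .
    moreover have "u \<in> space (null_pvals K)" using u by (auto simp: null_pvals_def space_PiM PiE_iff)
    ultimately show "u \<in> S" unfolding S_def by simp
  qed
  have "emeasure (null_pvals K) (Pi\<^sub>E {..<K} A) = (\<Prod>k<K. emeasure (uniform_measure lborel {0..1::real}) (A k))"
    unfolding null_pvals_def by (rule P.emeasure_PiM) (auto simp: A_def)
  also have "\<dots> = (\<Prod>k<K. (if k = 0 then ennreal (exp (- t)) else 1))"
  proof (rule prod.cong[OF refl])
    fix k assume "k \<in> {..<K}"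
    have "{0..1} \<inter> A k = A k" by (auto simp: A_def intro: order_trans[OF _ et])
    then show "emeasure (uniform_measure lborel {0..1::real}) (A k) = (if k = 0 then ennreal (exp (- t)) else 1)"
      by (auto simp: A_def divide_ennreal_def)
  qed
  also have "\<dots> = ennreal (exp (- t))"
  proof -
    have "{..<K} = insert 0 {1..<K}" using K by auto
    then show ?thesis by (simp add: prod.If_cases)
  qed
  finally have eq: "emeasure (null_pvals K) (Pi\<^sub>E {..<K} A) = ennreal (exp (- t))" .
  have "ennreal (exp (- t)) \<le> emeasure (null_pvals K) S"
    unfolding eq[symmetric] by (rule emeasure_mono[OF sub Ssets])
  also have "\<dots> = ennreal (AFp_pvalue K t)"
    unfolding AFp_pvalue_def S_def by (rule N.emeasure_eq_measure)
  finally have le: "ennreal (exp (- t)) \<le> ennreal (AFp_pvalue K t)" .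
  have "0 \<le> AFp_pvalue K t" unfolding AFp_pvalue_def by simp
  then show ?thesis using le ennreal_le_iff by blast
qed

lemma unif_powr_integral:
  assumes a: "0 \<le> a" "a < 1"
  shows "(\<integral>\<^sup>+x. ennreal (x powr (-a)) \<partial>uniform_measure lborel {0..1::real}) = ennreal (1/(1-a))"
proof -
  have "(\<integral>\<^sup>+x. ennreal (x powr (-a)) \<partial>uniform_measure lborel {0..1::real})
      = (\<integral>\<^sup>+x. ennreal (x powr (-a)) * indicator {0..1} x \<partial>lborel) / emeasure lborel {0..1::real}"
    by (rule nn_integral_uniform_measure) auto
  also have "\<dots> = (\<integral>\<^sup>+x. ennreal (indicator {0..1} x * x powr (-a)) \<partial>lborel)"
    by (auto intro!: nn_integral_cong simp: indicator_def divide_ennreal_def)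
  also have "\<dots> = ennreal (1 powr (-a + 1) / (-a + 1))"
    using a by (intro nn_integral_has_integral_lebesgue has_integral_powr_from_0) auto
  also have "1 powr (-a + 1) / (-a + 1) = 1/(1-a)" by simp
  finally show ?thesis .
qed

lemma pv_upper:
  assumes K: "1 \<le> K" and a: "0 \<le> a" "a < 1"
  shows "AFp_pvalue K t \<le> exp (- a * t) * (1/(1-a))^K"
proof -
  interpret P: product_prob_space "\<lambda>_::nat. uniform_measure lborel {0..1::real}" "{..<K}" by (rule unif_pps)
  interpret N: prob_space "null_pvals K" by (rule null_prob)
  define S where "S = {u \<in> space (null_pvals K). t \<le> AFp_stat K u}"
  have Ssets: "S \<in> sets (null_pvals K)"
    unfolding S_def using AFp_meas[of K] by measurable
  have AE1: "AE x in uniform_measure lborel {0..1::real}. x \<in> {0<..1}"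
  proof (rule AE_uniform_measureI)
    show "AE x in lborel. x \<in> {0..1::real} \<longrightarrow> x \<in> {0<..1}"
      using AE_lborel_singleton[of 0] by eventually_elim auto
  qed simp
  have AEu: "AE u in null_pvals K. \<forall>k\<in>{..<K}. u k \<in> {0<..1}"
    unfolding null_pvals_def
  proof (subst AE_finite_all, simp, intro ballI)
    fix k :: nat assume "k \<in> {..<K}"
    then show "AE u in Pi\<^sub>M {..<K} (\<lambda>_. uniform_measure lborel {0..1::real}). u k \<in> {0<..1}"
      by (rule P.AE_component[where P="\<lambda>x. x \<in> {0<..1}"]) (rule AE1)
  qed
  have "emeasure (null_pvals K) S = (\<integral>\<^sup>+u. indicator S u \<partial>null_pvals K)"
    using Ssets by simp
  also have "\<dots> \<le> (\<integral>\<^sup>+u. ennreal (exp (- a * t)) * (\<Prod>k\<in>{..<K}. ennreal (u k powr (-a))) \<partial>null_pvals K)"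
  proof (rule nn_integral_mono_AE)
    show "AE u in null_pvals K. indicator S u \<le> ennreal (exp (- a * t)) * (\<Prod>k\<in>{..<K}. ennreal (u k powr (-a)))"
      using AEu
    proof eventually_elim
      case (elim u)
      show ?case
      proof (cases "u \<in> S")
        case False then show ?thesis by simp
      next
        case True
        have p: "0 < u k \<and> u k \<le> 1" if "k < K" for k using elim that by auto
        define s where "s = - (\<Sum>k<K. ln (u k))"
        have ts: "t \<le> s" using True AFp_upper[of K u] p K unfolding S_def s_def by fastforce
        have "(\<Prod>k\<in>{..<K}. u k powr (-a)) = (\<Prod>k\<in>{..<K}. exp (- a * ln (u k)))"
        proof (intro prod.cong refl)
          fix k assume "k \<in> {..<K}"
          then have "u k \<noteq> 0" using p[of k] by auto
          then show "u k powr (-a) = exp (- a * ln (u k))" by (simp add: powr_def)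
        qed
        also have "\<dots> = exp (a * s)" unfolding s_def exp_sum[OF finite_lessThan, symmetric]
          by (simp add: sum_distrib_left sum_negf)
        finally have pr: "(\<Prod>k\<in>{..<K}. u k powr (-a)) = exp (a * s)" .
        have "1 \<le> exp (- a * t) * exp (a * s)"
        proof -
          have "exp (- a * t) * exp (a * s) = exp (a * (s - t))" by (simp add: algebra_simps flip: exp_add)
          also have "1 \<le> \<dots>" using ts a by simp
          finally show ?thesis by simp
        qed
        then have "ennreal 1 \<le> ennreal (exp (- a * t) * (\<Prod>k\<in>{..<K}. u k powr (-a)))"
          unfolding pr by (rule ennreal_leI)
        also have "ennreal (exp (- a * t) * (\<Prod>k\<in>{..<K}. u k powr (-a)))
             = ennreal (exp (- a * t)) * (\<Prod>k\<in>{..<K}. ennreal (u k powr (-a)))"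
        proof -
          have "0 \<le> (\<Prod>k\<in>{..<K}. u k powr (-a))" by (intro prod_nonneg) auto
          then show ?thesis by (simp add: ennreal_mult prod_ennreal)
        qed
        finally show ?thesis using True by simp
      qed
    qed
  qed
  also have "\<dots> = ennreal (exp (- a * t)) * (\<integral>\<^sup>+u. (\<Prod>k\<in>{..<K}. ennreal (u k powr (-a))) \<partial>null_pvals K)"
    by (rule nn_integral_cmult) (unfold null_pvals_def, measurable)
  also have "(\<integral>\<^sup>+u. (\<Prod>k\<in>{..<K}. ennreal (u k powr (-a))) \<partial>null_pvals K)
      = (\<Prod>k\<in>{..<K}. (\<integral>\<^sup>+x. ennreal (x powr (-a)) \<partial>uniform_measure lborel {0..1::real}))"
    unfolding null_pvals_def
    by (rule P.product_nn_integral_prod[where f="\<lambda>_ x. ennreal (x powr (-a))"]) auto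
  also have "\<dots> = ennreal (1/(1-a)) ^ K" using unif_powr_integral[OF a] by simp
  also have "ennreal (exp (- a * t)) * ennreal (1/(1-a)) ^ K = ennreal (exp (- a * t) * (1/(1-a))^K)"
    using a by (simp add: ennreal_mult ennreal_power)
  finally have le: "emeasure (null_pvals K) S \<le> ennreal (exp (- a * t) * (1/(1-a))^K)" .
  have "emeasure (null_pvals K) S = ennreal (AFp_pvalue K t)"
    unfolding AFp_pvalue_def S_def by (rule N.emeasure_eq_measure)
  with le have "ennreal (AFp_pvalue K t) \<le> ennreal (exp (- a * t) * (1/(1-a))^K)" by simp
  moreover have "0 \<le> exp (- a * t) * (1/(1-a))^K" using a by simp
  ultimately show ?thesis using ennreal_le_iff by blast
qed

theorem theorem1:
  fixes M :: "'a measure"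
    and K l :: nat
    and \<Theta> \<Theta>0 :: "nat \<Rightarrow> 'b set"
    and \<theta> :: "nat \<Rightarrow> 'b"
    and c :: "nat \<Rightarrow> 'b \<Rightarrow> real"
    and P :: "nat \<Rightarrow> nat \<Rightarrow> 'a \<Rightarrow> real"
    and N :: "nat \<Rightarrow> nat \<Rightarrow> nat"
    and lam :: "nat \<Rightarrow> real"
  assumes M: "prob_space M"
    and K: "1 \<le> K"
    and l: "l \<le> K"
    and Theta: "\<And>i. i < K \<Longrightarrow> \<Theta>0 i \<subseteq> \<Theta> i"
    and c_null: "\<And>i t. i < K \<Longrightarrow> t \<in> \<Theta>0 i \<Longrightarrow> c i t = 0"
    and c_alt: "\<And>i t. i < K \<Longrightarrow> t \<in> \<Theta> i - \<Theta>0 i \<Longrightarrow> c i t > 0"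
    and theta_alt: "\<And>i. i < l \<Longrightarrow> \<theta> i \<in> \<Theta> i - \<Theta>0 i"
    and theta_null: "\<And>i. l \<le> i \<Longrightarrow> i < K \<Longrightarrow> \<theta> i \<in> \<Theta>0 i"
    and pval_range: "\<And>i k \<omega>. i < K \<Longrightarrow> \<omega> \<in> space M \<Longrightarrow> 0 < P i k \<omega> \<and> P i k \<omega> \<le> 1"
    and slope: "\<And>i. i < K \<Longrightarrow>
       AE \<omega> in M. (\<lambda>k. - (2 / real k) * ln (P i k \<omega>)) \<longlonglongrightarrow> c i (\<theta> i)"
    and n_inf: "filterlim (\<lambda>m. (\<Sum>i<K. real (N i m)) / real K) at_top sequentially"
    and ratio: "\<And>i. i < K \<Longrightarrow>
       (\<lambda>m. real (N i m) / ((\<Sum>i<K. real (N i m)) / real K)) \<longlonglongrightarrow> lam i"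
    and lam_pos: "\<And>i. i < K \<Longrightarrow> lam i > 0"
    and lam_sum: "(\<Sum>i<K. lam i) = real K"
    and order: "\<And>i j. i \<le> j \<Longrightarrow> j < K \<Longrightarrow> lam j * c j (\<theta> j) \<le> lam i * c i (\<theta> i)"
  shows "AE \<omega> in M.
     (\<lambda>m. - (2 / ((\<Sum>i<K. real (N i m)) / real K))
            * ln (AFp_pvalue K (AFp_stat K (\<lambda>i. P i (N i m) \<omega>))))
     \<longlonglongrightarrow> (\<Sum>i<l. lam i * c i (\<theta> i))"
proof -
  define nn where "nn m = (\<Sum>i<K. real (N i m)) / real K" for m
  define L where "L = (\<Sum>i<l. lam i * c i (\<theta> i))"
  have Lfull: "(\<Sum>i<K. lam i * c i (\<theta> i)) = L"
  proof -
    have "(\<Sum>i<K. lam i * c i (\<theta> i)) = (\<Sum>i\<in>{0..<l}. lam i * c i (\<theta> i)) + (\<Sum>i\<in>{l..<K}. lam i * c i (\<theta> i))"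
      using sum.atLeastLessThan_concat[of 0 l K "\<lambda>i. lam i * c i (\<theta> i)"] l by (simp add: atLeast0LessThan)
    also have "(\<Sum>i\<in>{l..<K}. lam i * c i (\<theta> i)) = 0"
      using c_null theta_null by (intro sum.neutral) auto
    finally show ?thesis by (simp add: L_def atLeast0LessThan)
  qed
  have nn_inf: "filterlim nn at_top sequentially" using n_inf unfolding nn_def .
  have Nlim: "filterlim (\<lambda>m. N i m) at_top sequentially" if i: "i < K" for i
  proof -
    have f1: "filterlim (\<lambda>m. real (N i m) / nn m * nn m) at_top sequentially"
      using ratio[OF i] lam_pos[OF i] nn_inf unfolding nn_def[symmetric]
      by (rule filterlim_tendsto_pos_mult_at_top)
    have e2: "eventually (\<lambda>m. real (N i m) / nn m * nn m = real (N i m)) sequentially"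
      using eventually_gt_at_top[of 0] filterlim_at_top_dense[THEN iffD1, OF nn_inf, rule_format, of 0]
      by eventually_elim simp
    have r: "filterlim (\<lambda>m. real (N i m)) at_top sequentially"
      using filterlim_cong[OF refl refl e2] f1 by blast
    show ?thesis unfolding filterlim_at_top
    proof
      fix Z :: nat
      show "eventually (\<lambda>m. Z \<le> N i m) sequentially"
        using r[unfolded filterlim_at_top, rule_format, of "real Z"] by (auto elim: eventually_mono)
    qed
  qed
  have nn_pos: "eventually (\<lambda>m. 1 < nn m) sequentially"
    using filterlim_at_top_dense[THEN iffD1, OF nn_inf, rule_format, of 1] .
  have AE_all: "AE \<omega> in M. \<forall>i\<in>{..<K}. (\<lambda>k. - (2 / real k) * ln (P i k \<omega>)) \<longlonglongrightarrow> c i (\<theta> i)"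
    by (subst AE_finite_all) (simp, intro ballI slope, simp)
  show ?thesis
    using AE_all AE_space
  proof eventually_elim
    case (elim \<omega>)
    define x where "x i m = P i (N i m) \<omega>" for i m
    define s where "s m = - (\<Sum>i<K. ln (x i m))" for m
    have xr: "0 < x i m \<and> x i m \<le> 1" if "i < K" for i m
      using pval_range[OF that elim(2)] unfolding x_def .
    have s_nn: "0 \<le> s m" for m unfolding s_def using xr by (auto intro!: sum_nonpos)
    have lim_i: "(\<lambda>m. - 2 * ln (x i m) / nn m) \<longlonglongrightarrow> lam i * c i (\<theta> i)" if i: "i < K" for i
    proof -
      have "(\<lambda>m. - (2 / real (N i m)) * ln (P i (N i m) \<omega>)) \<longlonglongrightarrow> c i (\<theta> i)"
        using filterlim_compose[OF elim(1)[rule_format, of i] Nlim[OF i]] i by simp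
      then have "(\<lambda>m. (real (N i m) / nn m) * (- (2 / real (N i m)) * ln (P i (N i m) \<omega>))) \<longlonglongrightarrow> lam i * c i (\<theta> i)"
        using ratio[OF i] unfolding nn_def[symmetric] by (intro tendsto_mult)
      moreover have "eventually (\<lambda>m. (real (N i m) / nn m) * (- (2 / real (N i m)) * ln (P i (N i m) \<omega>)) = - 2 * ln (x i m) / nn m) sequentially"
        using Nlim[OF i, unfolded filterlim_at_top, rule_format, of 1]
        by eventually_elim (simp add: x_def field_simps)
      ultimately show ?thesis by (rule Lim_transform_eventually)
    qed
    have Slim: "(\<lambda>m. 2 * s m / nn m) \<longlonglongrightarrow> L"
    proof -
      have "(\<lambda>m. \<Sum>i<K. - 2 * ln (x i m) / nn m) \<longlonglongrightarrow> (\<Sum>i<K. lam i * c i (\<theta> i))"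
        by (intro tendsto_sum lim_i) auto
      moreover have "(\<Sum>i<K. - 2 * ln (x i m) / nn m) = 2 * s m / nn m" for m
        unfolding s_def by (simp add: sum_divide_distrib[symmetric] sum_distrib_left[symmetric] sum_negf)
      ultimately show ?thesis using Lfull by simp
    qed
    define lo where "lo m = (1 - 1 / nn m) * (2 * s m / nn m - 2 * ln (real K) / nn m - 4 * real K * sqrt (s m / (nn m)^2)) - 2 * real K * (ln (nn m) / nn m)" for m
    define Q where "Q m = - (2 / nn m) * ln (AFp_pvalue K (AFp_stat K (\<lambda>i. P i (N i m) \<omega>)))" for m
    have inv0: "(\<lambda>m. 1 / nn m) \<longlonglongrightarrow> 0"
      using tendsto_divide_0[OF tendsto_const nn_inf[THEN filterlim_at_top_imp_at_infinity]] .
    have lo_lim: "lo \<longlonglongrightarrow> L"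
    proof -
      have lnn: "(\<lambda>m. ln (nn m) / nn m) \<longlonglongrightarrow> 0"
        using filterlim_compose[OF ln_x_over_x_tendsto_0 nn_inf] by simp
      have sq: "(\<lambda>m. sqrt (s m / (nn m)^2)) \<longlonglongrightarrow> 0"
      proof -
        have "(\<lambda>m. sqrt ((2 * s m / nn m) / 2 * (1 / nn m))) \<longlonglongrightarrow> sqrt (L / 2 * 0)"
          by (intro tendsto_intros Slim inv0) simp
        moreover have "(2 * s m / nn m) / 2 * (1 / nn m) = s m / (nn m)^2" for m
          by (simp add: power2_eq_square)
        ultimately show ?thesis by (simp only: mult_zero_right real_sqrt_zero)
      qed
      have ck: "(\<lambda>m. 2 * ln (real K) / nn m) \<longlonglongrightarrow> 0"
        using tendsto_divide_0[OF tendsto_const nn_inf[THEN filterlim_at_top_imp_at_infinity]] .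
      have "lo \<longlonglongrightarrow> (1 - 0) * (L - 0 - 4 * real K * 0) - 2 * real K * 0"
        unfolding lo_def
        by (intro tendsto_intros inv0 Slim sq lnn ck)
      then show ?thesis by simp
    qed
    have bounds: "eventually (\<lambda>m. lo m \<le> Q m \<and> Q m \<le> 2 * s m / nn m) sequentially"
      using nn_pos
    proof eventually_elim
      case (elim m)
      define T where "T = AFp_stat K (\<lambda>i. x i m)"
      define a where "a = 1 - 1 / nn m"
      have a: "0 \<le> a" "a < 1" using elim unfolding a_def by (auto simp: field_simps)
      have T0: "0 \<le> T" unfolding T_def using K by (rule AFp_nonneg)
      have Tup: "T \<le> s m" unfolding T_def s_def using xr K by (intro AFp_upper) (auto simp: less_imp_le)
      have Tlo: "s m - ln (real K) - 2 * real K * sqrt (s m) \<le> T"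
        unfolding T_def s_def using xr K by (intro AFp_lower2) auto
      have pl: "exp (- T) \<le> AFp_pvalue K T" using pv_lower[OF K T0] .
      have pu: "AFp_pvalue K T \<le> exp (- a * T) * (1/(1-a))^K" using pv_upper[OF K a] .
      have pvpos: "0 < AFp_pvalue K T" using pl exp_gt_zero[of "- T"] by linarith
      have Qeq: "Q m = - (2 / nn m) * ln (AFp_pvalue K T)"
        unfolding Q_def T_def x_def ..
      have nnp: "0 < nn m" using elim by simp
      have "ln (exp (- T)) \<le> ln (AFp_pvalue K T)" using pl pvpos by (subst ln_le_cancel_iff) auto
      then have lnl: "- T \<le> ln (AFp_pvalue K T)" by simp
      have ia: "1/(1-a) = nn m" using nnp by (simp add: a_def)
      have "ln (AFp_pvalue K T) \<le> ln (exp (- a * T) * (nn m)^K)"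
        using pu pvpos nnp unfolding ia by (subst ln_le_cancel_iff) auto
      also have "\<dots> = - a * T + real K * ln (nn m)"
        using nnp by (simp add: ln_mult ln_realpow)
      finally have lnu: "ln (AFp_pvalue K T) \<le> - a * T + real K * ln (nn m)" .
      have up: "Q m \<le> 2 * s m / nn m"
      proof -
        have "Q m = (2 / nn m) * (- ln (AFp_pvalue K T))" unfolding Qeq by simp
        also have "\<dots> \<le> (2 / nn m) * T" using lnl nnp by (intro mult_left_mono) auto
        also have "\<dots> \<le> (2 / nn m) * s m" using Tup nnp by (intro mult_left_mono) auto
        finally show ?thesis by simp
      qed
      have sqeq: "sqrt (s m / (nn m)^2) = sqrt (s m) / nn m"
        using nnp by (simp add: real_sqrt_divide)
      have "lo m = (2 / nn m) * (a * (s m - ln (real K) - 2 * real K * sqrt (s m)) - real K * ln (nn m))"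
        unfolding lo_def sqeq a_def using nnp by (simp add: field_simps)
      also have "\<dots> \<le> (2 / nn m) * (a * T - real K * ln (nn m))"
        using Tlo a nnp by (intro mult_left_mono diff_right_mono) auto
      also have "\<dots> \<le> (2 / nn m) * (- ln (AFp_pvalue K T))" using lnu nnp by (intro mult_left_mono) auto
      also have "\<dots> = Q m" unfolding Qeq by simp
      finally show ?case using up by simp
    qed
    have "Q \<longlonglongrightarrow> L"
      by (rule tendsto_sandwich[OF _ _ lo_lim Slim]) (use bounds in \<open>auto elim: eventually_mono\<close>)
    then show ?case unfolding Q_def nn_def L_def .
  qed
qed

end
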